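(* Let $G$ be an admissible graph, let $T$ be the adjacency matrix of its oriented line graph, let $\lambda>0$ be the largest eigenvalue of $T$, and let $\zeta_G(x)=\exp\left(\sum_{k=1}^\infty \frac{\operatorname{tr}(T^k)}{k}x^k\right)$ for $x\in[0,\frac{1}{\lambda})$. Fix $a$ with $0<a<\frac{1}{\lambda}$ and define $s:[0,1]\to\mathbb{R}$ by $$s(p)=p\cdot\frac{\zeta_G(a)+1-\left(\zeta_G(ap)+p\right)}{1+a\zeta_G'(a)}.$$ Then $s$ has a global maximum in $(0,1)$; that is, there exists $c\in(0,1)$ with $s(c)\ge s(p)$ for all $p\in[0,1]$.
   Context: An admissible graph is a simple, finite, connected, undirected graph with no vertex of degree one which is neither a cycle graph nor a path graph. If $G$ has $m$ edges, let $\mathcal{E}=\{e^{(1)},\dots,e^{(2m)}\}$ be the set of its $2m$ oriented edges (each undirected edge $\{u,v\}$ gives the two directed edges $(u,v)$ and $(v,u)$; for $e=(u,v)$ write $i(e)=u$, $t(e)=v$). The oriented line graph $\overline{G}$ has vertex set $\mathcal{E}$ and a directed edge from $e$ to $f$ iff $t(e)=i(f)$ and $i(e)\neq t(f)$. $T$ is the $2m\times 2m$ $0/1$ adjacency matrix of $\overline{G}$. The function $\zeta_G$ is the Ihara zeta function of $G$ restricted to the real interval $[0,1/\lambda)$, where the defining series converges; $\zeta_G'$ is its derivative. *)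

theory Defs
  imports "HOL-Analysis.Analysis"
begin

(* A simple undirected graph is given by a vertex set V and a symmetric,
   irreflexive edge relation E (a set of ordered pairs, containing both
   orientations of each undirected edge).  Hence E itself is exactly the set
   of oriented edges, and card E = 2m. *)

definition simple_graph :: "'a set \<Rightarrow> ('a \<times> 'a) set \<Rightarrow> bool" where
  "simple_graph V E \<longleftrightarrow> finite V \<and> E \<subseteq> V \<times> V \<and> sym E \<and> (\<forall>v. (v, v) \<notin> E)"

definition graph_connected :: "'a set \<Rightarrow> ('a \<times> 'a) set \<Rightarrow> bool" where
  "graph_connected V E \<longleftrightarrow> V \<noteq> {} \<and> (\<forall>u\<in>V. \<forall>v\<in>V. (u, v) \<in> E\<^sup>*)"

definition degree :: "('a \<times> 'a) set \<Rightarrow> 'a \<Rightarrow> nat" where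
  "degree E v = card {w. (v, w) \<in> E}"

definition path_edges :: "'a list \<Rightarrow> ('a \<times> 'a) set" where
  "path_edges xs = {(xs ! i, xs ! Suc i) | i. Suc i < length xs}
                   \<union> {(xs ! Suc i, xs ! i) | i. Suc i < length xs}"

definition is_path_graph :: "'a set \<Rightarrow> ('a \<times> 'a) set \<Rightarrow> bool" where
  "is_path_graph V E \<longleftrightarrow> (\<exists>xs. distinct xs \<and> set xs = V \<and> xs \<noteq> [] \<and> E = path_edges xs)"

definition is_cycle_graph :: "'a set \<Rightarrow> ('a \<times> 'a) set \<Rightarrow> bool" where
  "is_cycle_graph V E \<longleftrightarrow> (\<exists>xs. distinct xs \<and> set xs = V \<and> length xs \<ge> 3 \<and>
      E = path_edges xs \<union> {(last xs, hd xs), (hd xs, last xs)})"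

definition admissible :: "'a set \<Rightarrow> ('a \<times> 'a) set \<Rightarrow> bool" where
  "admissible V E \<longleftrightarrow> simple_graph V E \<and> graph_connected V E \<and>
     (\<forall>v\<in>V. degree E v \<noteq> 1) \<and> \<not> is_cycle_graph V E \<and> \<not> is_path_graph V E"

definition olg_T :: "('a \<times> 'a) \<Rightarrow> ('a \<times> 'a) \<Rightarrow> real" where
  "olg_T e f = (if snd e = fst f \<and> fst e \<noteq> snd f then 1 else 0)"

fun olg_Tpow :: "('a \<times> 'a) set \<Rightarrow> nat \<Rightarrow> ('a \<times> 'a) \<Rightarrow> ('a \<times> 'a) \<Rightarrow> real" where
  "olg_Tpow E 0 e f = (if e = f then 1 else 0)"
| "olg_Tpow E (Suc k) e f = (\<Sum>g\<in>E. olg_T e g * olg_Tpow E k g f)"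

definition trace_Tpow :: "('a \<times> 'a) set \<Rightarrow> nat \<Rightarrow> real" where
  "trace_Tpow E k = (\<Sum>e\<in>E. olg_Tpow E k e e)"

definition T_eigenvalue :: "('a \<times> 'a) set \<Rightarrow> complex \<Rightarrow> bool" where
  "T_eigenvalue E \<mu> \<longleftrightarrow> (\<exists>v :: ('a \<times> 'a) \<Rightarrow> complex. (\<exists>e\<in>E. v e \<noteq> 0) \<and>
      (\<forall>e\<in>E. (\<Sum>f\<in>E. of_real (olg_T e f) * v f) = \<mu> * v e))"

definition largest_eigenvalue :: "('a \<times> 'a) set \<Rightarrow> real \<Rightarrow> bool" where
  "largest_eigenvalue E lam \<longleftrightarrow> T_eigenvalue E (of_real lam) \<and>
      (\<forall>\<mu>::real. T_eigenvalue E (of_real \<mu>) \<longrightarrow> \<mu> \<le> lam)"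

definition ihara_zeta :: "('a \<times> 'a) set \<Rightarrow> real \<Rightarrow> real" where
  "ihara_zeta E x = exp (\<Sum>k. trace_Tpow E (Suc k) / real (Suc k) * x ^ Suc k)"

end

theory Submission
  imports Defs "Jordan_Normal_Form.Determinant"
begin

definition rowsum :: "('a \<times> 'a) set \<Rightarrow> nat \<Rightarrow> ('a \<times> 'a) \<Rightarrow> real" where
  "rowsum E k e = (\<Sum>f\<in>E. olg_Tpow E k e f)"

lemma olg_T_nonneg: "0 \<le> olg_T e f" and olg_T_le1: "olg_T e f \<le> 1"
  by (auto simp: olg_T_def)

lemma Tpow_nonneg: "0 \<le> olg_Tpow E k e f"
  by (induction k arbitrary: e) (auto intro!: sum_nonneg mult_nonneg_nonneg olg_T_nonneg)

lemma rowsum_nonneg: "0 \<le> rowsum E k e"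
  unfolding rowsum_def by (intro sum_nonneg Tpow_nonneg)

lemma rowsum_0: "finite E \<Longrightarrow> e \<in> E \<Longrightarrow> rowsum E 0 e = 1"
  unfolding rowsum_def by simp

lemma rowsum_Suc: "rowsum E (Suc k) e = (\<Sum>g\<in>E. olg_T e g * rowsum E k g)"
proof -
  have "rowsum E (Suc k) e = (\<Sum>f\<in>E. \<Sum>g\<in>E. olg_T e g * olg_Tpow E k g f)"
    by (simp add: rowsum_def)
  also have "\<dots> = (\<Sum>g\<in>E. \<Sum>f\<in>E. olg_T e g * olg_Tpow E k g f)"
    by (rule sum.swap)
  also have "\<dots> = (\<Sum>g\<in>E. olg_T e g * rowsum E k g)"
    by (simp add: rowsum_def sum_distrib_left)
  finally show ?thesis .
qed

lemma diag_le_rowsum: "finite E \<Longrightarrow> e \<in> E \<Longrightarrow> olg_Tpow E k e e \<le> rowsum E k e"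
  unfolding rowsum_def by (rule member_le_sum) (auto intro: Tpow_nonneg)

lemma subinv:
  assumes fin: "finite E" and v1: "\<forall>e\<in>E. 1 \<le> v e" and t: "0 \<le> t" and q: "0 \<le> q"
    and sub: "\<forall>e\<in>E. t * (\<Sum>g\<in>E. olg_T e g * v g) \<le> q * v e"
  shows "\<forall>e\<in>E. t ^ k * rowsum E k e \<le> q ^ k * v e"
proof (induction k)
  case 0 then show ?case using v1 fin by (simp add: rowsum_0)
next
  case (Suc k)
  show ?case
  proof
    fix e assume e: "e \<in> E"
    have "t ^ Suc k * rowsum E (Suc k) e = t * (\<Sum>g\<in>E. olg_T e g * (t ^ k * rowsum E k g))"
      by (simp add: rowsum_Suc sum_distrib_left algebra_simps)
    also have "\<dots> \<le> t * (\<Sum>g\<in>E. olg_T e g * (q ^ k * v g))"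
      using Suc.IH t by (intro mult_left_mono sum_mono mult_left_mono) (auto simp: olg_T_nonneg)
    also have "\<dots> = q ^ k * (t * (\<Sum>g\<in>E. olg_T e g * v g))"
      by (simp add: sum_distrib_left algebra_simps)
    also have "\<dots> \<le> q ^ k * (q * v e)"
      using sub e q by (intro mult_left_mono) auto
    finally show "t ^ Suc k * rowsum E (Suc k) e \<le> q ^ Suc k * v e" by (simp add: algebra_simps)
  qed
qed

definition convset :: "('a \<times> 'a) set \<Rightarrow> real set" where
  "convset E = {t. 0 \<le> t \<and> (\<forall>e\<in>E. summable (\<lambda>k. t ^ k * rowsum E k e))}"

lemma subinv_conv:
  assumes fin: "finite E" and v1: "\<forall>e\<in>E. 1 \<le> v e" and t: "0 \<le> t" and q: "0 \<le> q" "q < 1"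
    and sub: "\<forall>e\<in>E. t * (\<Sum>g\<in>E. olg_T e g * v g) \<le> q * v e"
  shows "t \<in> convset E"
  unfolding convset_def
proof (intro CollectI conjI ballI t)
  fix e assume e: "e \<in> E"
  show "summable (\<lambda>k. t ^ k * rowsum E k e)"
  proof (rule summable_comparison_test)
    show "\<exists>N. \<forall>n\<ge>N. norm (t ^ n * rowsum E n e) \<le> v e * q ^ n"
      using subinv[OF fin v1 t q(1) sub] e t by (auto simp: rowsum_nonneg mult.commute)
    show "summable (\<lambda>n. v e * q ^ n)" using q by (intro summable_mult summable_geometric) auto
  qed
qed

lemma convset_down: "t \<in> convset E \<Longrightarrow> 0 \<le> t' \<Longrightarrow> t' \<le> t \<Longrightarrow> t' \<in> convset E"
proof -
  assume tC: "t \<in> convset E" and t': "0 \<le> t'" "t' \<le> t"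
  have "summable (\<lambda>k. t' ^ k * rowsum E k e)" if e: "e \<in> E" for e
  proof (rule summable_comparison_test)
    have "norm (t' ^ n * rowsum E n e) \<le> t ^ n * rowsum E n e" for n
    proof -
      have "norm (t' ^ n * rowsum E n e) = t' ^ n * rowsum E n e"
        using t' by (simp add: abs_mult rowsum_nonneg)
      also have "\<dots> \<le> t ^ n * rowsum E n e"
        by (rule mult_right_mono[OF power_mono[OF t'(2) t'(1)] rowsum_nonneg])
      finally show ?thesis .
    qed
    then show "\<exists>N. \<forall>n\<ge>N. norm (t' ^ n * rowsum E n e) \<le> t ^ n * rowsum E n e" by blast
    show "summable (\<lambda>n. t ^ n * rowsum E n e)" using tC e unfolding convset_def by auto
  qed
  then show ?thesis using t' unfolding convset_def by auto
qed

lemma S_eq: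
  assumes fin: "finite E" and tC: "t \<in> convset E" and e: "e \<in> E"
  shows "(\<Sum>k. t ^ k * rowsum E k e) = 1 + t * (\<Sum>g\<in>E. olg_T e g * (\<Sum>k. t ^ k * rowsum E k g))"
proof -
  have sm: "summable (\<lambda>k. t ^ k * rowsum E k g)" if "g \<in> E" for g
    using tC that unfolding convset_def by auto
  have "(\<Sum>k. t ^ k * rowsum E k e) = (\<Sum>k. t ^ Suc k * rowsum E (Suc k) e) + t ^ 0 * rowsum E 0 e"
    using suminf_split_head[OF sm[OF e]] by simp
  also have "(\<Sum>k. t ^ Suc k * rowsum E (Suc k) e) = (\<Sum>k. t * (\<Sum>g\<in>E. olg_T e g * (t ^ k * rowsum E k g)))"
    by (simp add: rowsum_Suc sum_distrib_left algebra_simps)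
  also have "\<dots> = t * (\<Sum>k. (\<Sum>g\<in>E. olg_T e g * (t ^ k * rowsum E k g)))"
    by (intro suminf_mult summable_sum summable_mult sm) auto
  also have "(\<Sum>k. (\<Sum>g\<in>E. olg_T e g * (t ^ k * rowsum E k g))) = (\<Sum>g\<in>E. (\<Sum>k. olg_T e g * (t ^ k * rowsum E k g)))"
    by (intro suminf_sum summable_mult sm) auto
  also have "\<dots> = (\<Sum>g\<in>E. olg_T e g * (\<Sum>k. t ^ k * rowsum E k g))"
    using sm by (intro sum.cong refl) (simp add: suminf_mult)
  finally show ?thesis using fin e by (simp add: rowsum_0)
qed

lemma S_nonneg: "0 \<le> t \<Longrightarrow> t \<in> convset E \<Longrightarrow> e \<in> E \<Longrightarrow> 0 \<le> (\<Sum>k. t ^ k * rowsum E k e)"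
  unfolding convset_def by (auto intro!: suminf_nonneg rowsum_nonneg mult_nonneg_nonneg)

lemma open_step:
  assumes fin: "finite E" and tC: "t \<in> convset E"
  shows "\<exists>t'>t. t' \<in> convset E"
proof (cases "t = 0")
  case True
  define t' where "t' = 1 / (2 * (real (card E) + 1))"
  have "t' \<in> convset E"
  proof (rule subinv_conv[OF fin, of "\<lambda>_. 1" _ "1/2"])
    show "\<forall>e\<in>E. t' * (\<Sum>g\<in>E. olg_T e g * 1) \<le> 1 / 2 * 1"
    proof
      fix e assume "e \<in> E"
      have "(\<Sum>g\<in>E. olg_T e g * 1) \<le> (\<Sum>g\<in>E. 1)" by (intro sum_mono) (simp add: olg_T_le1)
      then have "(\<Sum>g\<in>E. olg_T e g * 1) \<le> real (card E)" by simp
      moreover have "0 \<le> t'" by (simp add: t'_def)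
      ultimately have "t' * (\<Sum>g\<in>E. olg_T e g * 1) \<le> t' * real (card E)" by (intro mult_left_mono)
      also have "\<dots> \<le> 1/2" by (simp add: t'_def field_simps)
      finally show "t' * (\<Sum>g\<in>E. olg_T e g * 1) \<le> 1 / 2 * 1" by simp
    qed
  qed (auto simp: t'_def)
  moreover have "t' > t" using True by (simp add: t'_def)
  ultimately show ?thesis by blast
next
  case False
  have t0: "0 < t" using tC False unfolding convset_def by auto
  define S where "S e = (\<Sum>k. t ^ k * rowsum E k e)" for e
  have Seq: "S e = 1 + t * (\<Sum>g\<in>E. olg_T e g * S g)" if "e \<in> E" for e
    using S_eq[OF fin tC that] by (simp add: S_def)
  have Snn: "0 \<le> S e" if "e \<in> E" for e using S_nonneg[of t E e] t0 tC that by (simp add: S_def)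
  have S1: "1 \<le> S e" if "e \<in> E" for e
  proof -
    have "0 \<le> t * (\<Sum>g\<in>E. olg_T e g * S g)"
      using t0 Snn by (intro mult_nonneg_nonneg sum_nonneg) (auto simp: olg_T_nonneg)
    then show ?thesis using Seq[OF that] by linarith
  qed
  define m where "m = 1 + (\<Sum>e\<in>E. S e)"
  have m1: "1 \<le> m" unfolding m_def using Snn by (simp add: sum_nonneg)
  have Sm: "S e \<le> m" if "e \<in> E" for e
  proof -
    have "S e \<le> (\<Sum>e\<in>E. S e)" using that fin Snn by (intro member_le_sum) auto
    then show ?thesis by (simp add: m_def)
  qed
  define r where "r = 1 + 1 / (2 * m)"
  define q where "q = r * (1 - 1 / m)"
  have r1: "1 < r" using m1 by (simp add: r_def)
  have q0: "0 \<le> q" using m1 r1 by (simp add: q_def)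
  have q1: "q < 1" using m1 by (simp add: q_def r_def field_simps)
  have "t * r \<in> convset E"
  proof (rule subinv_conv[OF fin, of S _ q])
    show "\<forall>e\<in>E. t * r * (\<Sum>g\<in>E. olg_T e g * S g) \<le> q * S e"
    proof
      fix e assume e: "e \<in> E"
      have "t * r * (\<Sum>g\<in>E. olg_T e g * S g) = r * (S e - 1)" using Seq[OF e] by simp
      also have "\<dots> \<le> r * ((1 - 1 / m) * S e)"
      proof (rule mult_left_mono)
        have "S e / m \<le> 1" using Sm[OF e] m1 by simp
        then show "S e - 1 \<le> (1 - 1 / m) * S e" by (simp add: algebra_simps)
      qed (use r1 in auto)
      finally show "t * r * (\<Sum>g\<in>E. olg_T e g * S g) \<le> q * S e" by (simp add: q_def)
    qed
  qed (use S1 t0 r1 q0 q1 in auto)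
  moreover have "t * r > t" using t0 r1 by simp
  ultimately show ?thesis by blast
qed

lemma fin_left_inverse:
  fixes M :: "'b \<Rightarrow> 'b \<Rightarrow> real" and E :: "'b set"
  assumes fin: "finite E"
    and inj: "\<And>v. (\<forall>e\<in>E. (\<Sum>f\<in>E. M e f * v f) = 0) \<Longrightarrow> (\<forall>e\<in>E. v e = 0)"
  shows "\<exists>B. \<forall>e\<in>E. \<forall>g\<in>E. (\<Sum>f\<in>E. B e f * M f g) = (if e = g then 1 else 0)"
proof -
  obtain xs where xs: "distinct xs" "set xs = E" using finite_distinct_list[OF fin] by blast
  define n where "n = length xs"
  have bij: "bij_betw (nth xs) {..<n} E"
    using xs by (metis bij_betw_nth lessThan_atLeast0 n_def)
  have sumE: "(\<Sum>f\<in>E. h f) = (\<Sum>j<n. h (xs ! j))" for h :: "'b \<Rightarrow> real"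
    using sum.reindex_bij_betw[OF bij, of h] by simp
  define ix where "ix = inv_into {..<n} (nth xs)"
  have ixn: "ix (xs ! j) = j" if "j < n" for j
    unfolding ix_def using bij_betw_inv_into_left[OF bij] that by simp
  define A where "A = mat n n (\<lambda>(i,j). M (xs ! i) (xs ! j))"
  have A: "A \<in> carrier_mat n n" by (simp add: A_def)
  have "det A \<noteq> 0"
  proof
    assume "det A = 0"
    then obtain v where v: "v \<in> carrier_vec n" "v \<noteq> 0\<^sub>v n" "A *\<^sub>v v = 0\<^sub>v n"
      using det_0_iff_vec_prod_zero[OF A] by blast
    define w where "w f = v $ (ix f)" for f :: 'b
    have "\<forall>e\<in>E. (\<Sum>f\<in>E. M e f * w f) = 0"
    proof
      fix e assume "e \<in> E"
      then obtain i where i: "i < n" "e = xs ! i" using xs by (metis in_set_conv_nth n_def)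
      have "(\<Sum>f\<in>E. M e f * w f) = (\<Sum>j<n. M (xs ! i) (xs ! j) * v $ j)"
        unfolding sumE w_def using xs i by (simp add: ixn n_def)
      also have "\<dots> = (A *\<^sub>v v) $ i"
        using i v(1) A by (simp add: A_def mult_mat_vec_def scalar_prod_def lessThan_atLeast0)
      also have "\<dots> = 0" using v(3) i by simp
      finally show "(\<Sum>f\<in>E. M e f * w f) = 0" .
    qed
    then have w0: "\<forall>e\<in>E. w e = 0" by (rule inj)
    have "v = 0\<^sub>v n"
    proof (rule eq_vecI)
      fix j assume j: "j < dim_vec (0\<^sub>v n)"
      then have "j < n" by simp
      then have "xs ! j \<in> E" using xs n_def by auto
      then have "w (xs ! j) = 0" using w0 by blast
      then show "v $ j = 0\<^sub>v n $ j" using \<open>j < n\<close> xs by (simp add: w_def ixn n_def)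
    qed (use v in auto)
    with v(2) show False by simp
  qed
  then have "A \<in> Units (ring_mat TYPE(real) n ())" by (rule det_non_zero_imp_unit[OF A])
  then obtain Bm where Bm: "Bm \<in> carrier_mat n n" "Bm * A = 1\<^sub>m n"
    unfolding Units_def ring_mat_def by auto
  define B where "B e f = Bm $$ (ix e, ix f)" for e f
  show ?thesis
  proof (intro exI ballI)
    fix e g assume e: "e \<in> E" and g: "g \<in> E"
    obtain i where i: "i < n" "e = xs ! i" using xs e by (metis in_set_conv_nth n_def)
    obtain k where k: "k < n" "g = xs ! k" using xs g by (metis in_set_conv_nth n_def)
    have "(\<Sum>f\<in>E. B e f * M f g) = (\<Sum>j<n. Bm $$ (i, j) * A $$ (j, k))"
      unfolding sumE B_def using xs i k by (simp add: ixn n_def A_def)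
    also have "\<dots> = (Bm * A) $$ (i, k)"
      using i k Bm(1) A by (simp add: scalar_prod_def lessThan_atLeast0)
    also have "\<dots> = (if i = k then 1 else 0)" using Bm i k by simp
    also have "\<dots> = (if e = g then 1 else 0)" using i k xs by (simp add: nth_eq_iff_index_eq n_def)
    finally show "(\<Sum>f\<in>E. B e f * M f g) = (if e = g then 1 else 0)" .
  qed
qed

lemma closed_step:
  assumes fin: "finite E" and t0: "0 < t0"
    and below: "\<And>t. 0 < t \<Longrightarrow> t < t0 \<Longrightarrow> t \<in> convset E"
    and B: "\<forall>e\<in>E. \<forall>g\<in>E. (\<Sum>f\<in>E. B e f * ((if f = g then 1 else 0) - t0 * olg_T f g)) = (if e = g then 1 else 0)"
  shows "t0 \<in> convset E"
proof -
  have Binv: "v e = (\<Sum>f\<in>E. B e f * (v f - t0 * (\<Sum>g\<in>E. olg_T f g * v g)))" if e: "e \<in> E" for v e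
  proof -
    have "(\<Sum>f\<in>E. B e f * (v f - t0 * (\<Sum>g\<in>E. olg_T f g * v g)))
        = (\<Sum>f\<in>E. \<Sum>g\<in>E. B e f * (((if f = g then 1 else 0) - t0 * olg_T f g) * v g))"
    proof (rule sum.cong[OF refl])
      fix f assume f: "f \<in> E"
      have "(\<Sum>g\<in>E. ((if f = g then 1 else 0) - t0 * olg_T f g) * v g)
            = (\<Sum>g\<in>E. (if f = g then v g else 0) - t0 * (olg_T f g * v g))"
        by (intro sum.cong refl) (auto simp: algebra_simps)
      also have "\<dots> = (\<Sum>g\<in>E. (if f = g then v g else 0)) - (\<Sum>g\<in>E. t0 * (olg_T f g * v g))"
        by (rule sum_subtractf)
      also have "\<dots> = v f - t0 * (\<Sum>g\<in>E. olg_T f g * v g)"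
        using f fin by (simp add: sum_distrib_left)
      finally show "B e f * (v f - t0 * (\<Sum>g\<in>E. olg_T f g * v g))
          = (\<Sum>g\<in>E. B e f * (((if f = g then 1 else 0) - t0 * olg_T f g) * v g))"
        by (simp add: sum_distrib_left[symmetric])
    qed
    also have "\<dots> = (\<Sum>g\<in>E. \<Sum>f\<in>E. B e f * (((if f = g then 1 else 0) - t0 * olg_T f g) * v g))"
      by (rule sum.swap)
    also have "\<dots> = (\<Sum>g\<in>E. (\<Sum>f\<in>E. B e f * ((if f = g then 1 else 0) - t0 * olg_T f g)) * v g)"
      by (simp add: sum_distrib_right mult.assoc)
    also have "\<dots> = (\<Sum>g\<in>E. (if e = g then 1 else 0) * v g)"
      using B e by (intro sum.cong refl) auto
    also have "\<dots> = (\<Sum>g\<in>E. (if e = g then v g else 0))" by (intro sum.cong refl) auto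
    also have "\<dots> = v e" using e fin by simp
    finally show ?thesis by simp
  qed
  define K where "K = (\<Sum>e\<in>E. \<Sum>f\<in>E. \<bar>B e f\<bar>)"
  define n where "n = real (card E)"
  have K0: "0 \<le> K" unfolding K_def by (intro sum_nonneg) auto
  have n0: "0 \<le> n" unfolding n_def by simp
  have rowK: "(\<Sum>f\<in>E. \<bar>B e f\<bar>) \<le> K" if "e \<in> E" for e
    unfolding K_def using that fin by (intro member_le_sum) (auto intro: sum_nonneg)
  define d where "d = min (t0 / 2) (1 / (2 * (n * K + 1)))"
  have nK0: "0 \<le> n * K" using n0 K0 by simp
  have d0: "0 < d" using t0 nK0 by (simp add: d_def)
  have dt: "d < t0" using t0 by (simp add: d_def)
  have dnK: "n * K * d \<le> 1 / 2"
  proof -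
    have "n * K * d \<le> n * K * (1 / (2 * (n * K + 1)))"
      using n0 K0 by (intro mult_left_mono) (auto simp: d_def)
    also have "\<dots> \<le> 1 / 2" using nK0 by (simp add: field_simps)
    finally show ?thesis .
  qed
  define R where "R = 2 * n * K"
  have bound: "(\<Sum>k<N. t ^ k * rowsum E k e) \<le> R" if tt: "t0 - d < t" "t < t0" and e: "e \<in> E" for t N e
  proof -
    have tpos: "0 < t" using tt dt by linarith
    have tC: "t \<in> convset E" using below[OF tpos tt(2)] .
    define S where "S e = (\<Sum>k. t ^ k * rowsum E k e)" for e
    have Seq: "S e = 1 + t * (\<Sum>g\<in>E. olg_T e g * S g)" if "e \<in> E" for e
      using S_eq[OF fin tC that] by (simp add: S_def)
    have Snn: "0 \<le> S e" if "e \<in> E" for e using S_nonneg[of t E e] tpos tC that by (simp add: S_def)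
    define \<sigma> where "\<sigma> = (\<Sum>e\<in>E. S e)"
    have \<sigma>0: "0 \<le> \<sigma>" unfolding \<sigma>_def using Snn by (simp add: sum_nonneg)
    have TS: "0 \<le> (\<Sum>g\<in>E. olg_T f g * S g) \<and> (\<Sum>g\<in>E. olg_T f g * S g) \<le> \<sigma>" for f
    proof
      show "0 \<le> (\<Sum>g\<in>E. olg_T f g * S g)" using Snn by (intro sum_nonneg mult_nonneg_nonneg) (auto simp: olg_T_nonneg)
      show "(\<Sum>g\<in>E. olg_T f g * S g) \<le> \<sigma>" unfolding \<sigma>_def
        using Snn by (intro sum_mono) (auto intro: mult_left_le_one_le simp: olg_T_nonneg olg_T_le1)
    qed
    have Sle: "S e \<le> K * (1 + (t0 - t) * \<sigma>)" if e: "e \<in> E" for e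
    proof -
      have "S e = (\<Sum>f\<in>E. B e f * (S f - t0 * (\<Sum>g\<in>E. olg_T f g * S g)))" by (rule Binv[OF e])
      also have "\<dots> \<le> (\<Sum>f\<in>E. \<bar>B e f\<bar> * (1 + (t0 - t) * \<sigma>))"
      proof (rule sum_mono)
        fix f assume f: "f \<in> E"
        have "S f - t0 * (\<Sum>g\<in>E. olg_T f g * S g) = 1 - (t0 - t) * (\<Sum>g\<in>E. olg_T f g * S g)"
          using Seq[OF f] by (simp add: algebra_simps)
        moreover have "0 \<le> (t0 - t) * (\<Sum>g\<in>E. olg_T f g * S g)" using TS tt by simp
        moreover have "(t0 - t) * (\<Sum>g\<in>E. olg_T f g * S g) \<le> (t0 - t) * \<sigma>"
          using TS tt by (intro mult_left_mono) auto
        ultimately have "\<bar>S f - t0 * (\<Sum>g\<in>E. olg_T f g * S g)\<bar> \<le> 1 + (t0 - t) * \<sigma>" by linarith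
        then have X: "\<bar>B e f\<bar> * \<bar>S f - t0 * (\<Sum>g\<in>E. olg_T f g * S g)\<bar> \<le> \<bar>B e f\<bar> * (1 + (t0 - t) * \<sigma>)"
          by (intro mult_left_mono) auto
        have "B e f * (S f - t0 * (\<Sum>g\<in>E. olg_T f g * S g)) \<le> \<bar>B e f * (S f - t0 * (\<Sum>g\<in>E. olg_T f g * S g))\<bar>"
          by (rule abs_ge_self)
        also have "\<dots> = \<bar>B e f\<bar> * \<bar>S f - t0 * (\<Sum>g\<in>E. olg_T f g * S g)\<bar>" by (rule abs_mult)
        finally show "B e f * (S f - t0 * (\<Sum>g\<in>E. olg_T f g * S g)) \<le> \<bar>B e f\<bar> * (1 + (t0 - t) * \<sigma>)" using X by linarith
      qed
      also have "\<dots> = (\<Sum>f\<in>E. \<bar>B e f\<bar>) * (1 + (t0 - t) * \<sigma>)" by (simp add: sum_distrib_right)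
      also have "\<dots> \<le> K * (1 + (t0 - t) * \<sigma>)"
        using rowK[OF e] tt \<sigma>0 by (intro mult_right_mono) auto
      finally show ?thesis .
    qed
    have "\<sigma> = (\<Sum>e\<in>E. S e)" by (rule \<sigma>_def)
    also have "\<dots> \<le> (\<Sum>e\<in>E. K * (1 + (t0 - t) * \<sigma>))" by (intro sum_mono Sle)
    also have "\<dots> = n * K + n * K * (t0 - t) * \<sigma>" by (simp add: n_def algebra_simps)
    also have "n * K * (t0 - t) * \<sigma> \<le> n * K * d * \<sigma>"
      using tt n0 K0 \<sigma>0 by (intro mult_right_mono mult_left_mono) auto
    also have "\<dots> \<le> 1/2 * \<sigma>" using dnK \<sigma>0 by (intro mult_right_mono) auto
    finally have \<sigma>R: "\<sigma> \<le> R" by (simp add: R_def)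
    have sm: "summable (\<lambda>k. t ^ k * rowsum E k e)" using tC e unfolding convset_def by auto
    have "(\<Sum>k<N. t ^ k * rowsum E k e) \<le> S e"
      unfolding S_def using tpos by (intro sum_le_suminf sm) (auto intro!: mult_nonneg_nonneg rowsum_nonneg)
    also have "S e \<le> \<sigma>" unfolding \<sigma>_def using fin e Snn by (intro member_le_sum) auto
    finally show ?thesis using \<sigma>R by simp
  qed
  have pbound: "(\<Sum>k<N. t0 ^ k * rowsum E k e) \<le> R" if e: "e \<in> E" for N e
  proof (rule tendsto_upperbound)
    show "((\<lambda>t. \<Sum>k<N. t ^ k * rowsum E k e) \<longlongrightarrow> (\<Sum>k<N. t0 ^ k * rowsum E k e)) (at_left t0)"
      by (intro tendsto_intros)
    have "\<forall>\<^sub>F t in at_left t0. t \<in> {t0 - d<..<t0}" by (rule eventually_at_left_real) (use d0 in simp)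
    then show "\<forall>\<^sub>F t in at_left t0. (\<Sum>k<N. t ^ k * rowsum E k e) \<le> R"
      by eventually_elim (use bound e in auto)
  qed (simp add: trivial_limit_at_left_real)
  show ?thesis unfolding convset_def
  proof (intro CollectI conjI ballI)
    show "0 \<le> t0" using t0 by simp
    fix e assume "e \<in> E"
    then show "summable (\<lambda>k. t0 ^ k * rowsum E k e)"
      by (intro summableI_nonneg_bounded[where x=R] pbound) (use t0 in \<open>auto intro!: mult_nonneg_nonneg rowsum_nonneg\<close>)
  qed
qed

lemma conv_below:
  assumes fin: "finite E" and b: "0 < b"
    and inv: "\<And>t. 0 < t \<Longrightarrow> t \<le> b \<Longrightarrow> \<exists>B. \<forall>e\<in>E. \<forall>g\<in>E.
        (\<Sum>f\<in>E. B e f * ((if f = g then 1 else 0) - t * olg_T f g)) = (if e = g then 1 else 0)"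
  shows "b \<in> convset E"
proof (rule ccontr)
  assume nb: "b \<notin> convset E"
  define C where "C = convset E"
  have C0: "0 \<in> C" unfolding C_def
    by (rule subinv_conv[OF fin, of "\<lambda>_. 1" _ "1/2"]) auto
  have Cb: "t \<le> b" if "t \<in> C" for t
  proof (rule ccontr)
    assume "\<not> t \<le> b"
    then have "b \<in> convset E" using convset_down[of t E b] that b by (auto simp: C_def)
    with nb show False by simp
  qed
  have bdd: "bdd_above C" using Cb by (intro bdd_aboveI[where M=b]) auto
  define t0 where "t0 = Sup C"
  have t0b: "t0 \<le> b" unfolding t0_def using C0 Cb by (intro cSup_least) auto
  obtain t1 where t1: "t1 > 0" "t1 \<in> C" using open_step[OF fin C0[unfolded C_def]] by (auto simp: C_def)
  have t0pos: "0 < t0" using cSup_upper[OF t1(2) bdd] t1 by (simp add: t0_def)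
  have below: "t \<in> convset E" if tpos: "0 < t" and tlt: "t < t0" for t
  proof -
    obtain t' where "t' \<in> C" "t < t'" using less_cSup_iff[of C t] C0 bdd tlt by (auto simp: t0_def)
    then show ?thesis using convset_down[of t' E t] tpos by (auto simp: C_def)
  qed
  obtain B where B: "\<forall>e\<in>E. \<forall>g\<in>E.
        (\<Sum>f\<in>E. B e f * ((if f = g then 1 else 0) - t0 * olg_T f g)) = (if e = g then 1 else 0)"
    using inv[OF t0pos t0b] by blast
  have "t0 \<in> convset E" by (rule closed_step[OF fin t0pos below B])
  then obtain t' where t': "t' > t0" "t' \<in> C" using open_step[OF fin] by (auto simp: C_def)
  have "t' \<le> t0" unfolding t0_def by (rule cSup_upper[OF t'(2) bdd])
  with t'(1) show False by simp
qed

lemma trace_summable: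
  assumes fin: "finite E" and b: "0 \<le> b" and bC: "b \<in> convset E"
  shows "summable (\<lambda>k. b ^ k * trace_Tpow E k)"
proof (rule summable_comparison_test)
  show "summable (\<lambda>k. \<Sum>e\<in>E. b ^ k * rowsum E k e)"
    using bC unfolding convset_def by (intro summable_sum) auto
  have "norm (b ^ k * trace_Tpow E k) \<le> (\<Sum>e\<in>E. b ^ k * rowsum E k e)" for k
  proof -
    have tr0: "0 \<le> trace_Tpow E k" unfolding trace_Tpow_def by (intro sum_nonneg Tpow_nonneg)
    have "norm (b ^ k * trace_Tpow E k) = b ^ k * trace_Tpow E k" using b tr0 by simp
    also have "\<dots> = (\<Sum>e\<in>E. b ^ k * olg_Tpow E k e e)" by (simp add: trace_Tpow_def sum_distrib_left)
    also have "\<dots> \<le> (\<Sum>e\<in>E. b ^ k * rowsum E k e)"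
      using b fin by (intro sum_mono mult_left_mono diag_le_rowsum) auto
    finally show ?thesis .
  qed
  then show "\<exists>N. \<forall>n\<ge>N. norm (b ^ n * trace_Tpow E n) \<le> (\<Sum>e\<in>E. b ^ n * rowsum E n e)" by blast
qed

lemma zeta_analysis:
  assumes fin: "finite E" and b: "0 < b" and bC: "b \<in> convset E" and a: "0 < a" "a < b"
  shows "0 \<le> deriv (ihara_zeta E) a"
    and "\<And>x. \<bar>x\<bar> < b \<Longrightarrow> isCont (ihara_zeta E) x"
    and "\<And>x y. 0 \<le> x \<Longrightarrow> x \<le> y \<Longrightarrow> y < b \<Longrightarrow> ihara_zeta E x \<le> ihara_zeta E y"
proof -
  define d where "d n = (if n = 0 then 0 else trace_Tpow E n / real n)" for n
  have tr0: "0 \<le> trace_Tpow E k" for k unfolding trace_Tpow_def by (intro sum_nonneg Tpow_nonneg)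
  have d0: "0 \<le> d n" for n using tr0 by (simp add: d_def)
  have hst: "summable (\<lambda>k. b ^ k * trace_Tpow E k)" by (rule trace_summable[OF fin _ bC]) (use b in simp)
  have hsb: "summable (\<lambda>n. d n * b ^ n)"
  proof (rule summable_comparison_test[OF _ hst])
    have "norm (d n * b ^ n) \<le> b ^ n * trace_Tpow E n" for n
    proof (cases "n = 0")
      case True then show ?thesis using tr0 b by (simp add: d_def)
    next
      case False
      have "norm (d n * b ^ n) = trace_Tpow E n / real n * b ^ n" using False tr0[of n] b by (simp add: d_def)
      also have "\<dots> \<le> trace_Tpow E n * b ^ n"
      proof (rule mult_right_mono)
        have "1 \<le> real n" using False by simp
        then have "trace_Tpow E n * 1 \<le> trace_Tpow E n * real n" by (intro mult_left_mono tr0)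
        then show "trace_Tpow E n / real n \<le> trace_Tpow E n" using False by (simp add: divide_le_eq)
      qed (use b in simp)
      finally show ?thesis by (simp add: mult.commute)
    qed
    then show "\<exists>N. \<forall>n\<ge>N. norm (d n * b ^ n) \<le> b ^ n * trace_Tpow E n" by blast
  qed
  define G where "G x = (\<Sum>n. d n * x ^ n)" for x :: real
  define G' where "G' x = (\<Sum>n. diffs d n * x ^ n)" for x :: real
  have hsx: "summable (\<lambda>n. d n * x ^ n)" if "\<bar>x\<bar> < b" for x
    by (rule powser_inside[OF hsb]) (use that b in simp)
  have Zeq: "ihara_zeta E x = exp (G x)" if "\<bar>x\<bar> < b" for x
  proof -
    have "(\<Sum>k. trace_Tpow E (Suc k) / real (Suc k) * x ^ Suc k) = (\<Sum>k. d (Suc k) * x ^ Suc k)"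
      by (simp add: d_def)
    also have "\<dots> = G x" using suminf_split_head[OF hsx[OF that]] by (simp add: G_def d_def)
    finally show ?thesis by (simp add: ihara_zeta_def)
  qed
  have DG: "DERIV G x :> G' x" if "\<bar>x\<bar> < b" for x
    unfolding G_def G'_def by (rule termdiffs_strong[OF hsb]) (use that b in simp)
  have DZ: "DERIV (ihara_zeta E) x :> exp (G x) * G' x" if x: "\<bar>x\<bar> < b" for x
  proof (rule has_field_derivative_transform_within_open[where S="{-b<..<b}"])
    show "((\<lambda>x. exp (G x)) has_field_derivative exp (G x) * G' x) (at x)"
      by (rule DERIV_chain2[OF DERIV_exp DG[OF x]])
    show "x \<in> {-b<..<b}" using x by auto
    show "exp (G y) = ihara_zeta E y" if "y \<in> {-b<..<b}" for y using Zeq that by auto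
  qed simp
  have G'0: "0 \<le> G' a"
    unfolding G'_def
  proof (rule suminf_nonneg)
    show "summable (\<lambda>n. diffs d n * a ^ n)"
      by (rule termdiff_converges[where K=b]) (use a hsx in auto)
    show "0 \<le> diffs d n * a ^ n" for n using d0 a by (simp add: diffs_def)
  qed
  show "0 \<le> deriv (ihara_zeta E) a"
    using DERIV_imp_deriv[OF DZ] a G'0 by simp
  show "isCont (ihara_zeta E) x" if "\<bar>x\<bar> < b" for x
    using DERIV_isCont[OF DZ[OF that]] .
  show "ihara_zeta E x \<le> ihara_zeta E y" if xy: "0 \<le> x" "x \<le> y" "y < b" for x y
  proof -
    have "G x \<le> G y" unfolding G_def
      using xy by (intro suminf_le hsx) (auto intro!: mult_left_mono power_mono d0)
    then show ?thesis using Zeq xy by simp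
  qed
qed

theorem theorem1:
  fixes V :: "'a set" and E :: "('a \<times> 'a) set" and lam a :: real and s :: "real \<Rightarrow> real"
  assumes "admissible V E"
    and "largest_eigenvalue E lam" and "lam > 0"
    and "0 < a" and "a < 1 / lam"
    and "\<And>p. s p = p * (ihara_zeta E a + 1 - (ihara_zeta E (a * p) + p))
                     / (1 + a * deriv (ihara_zeta E) a)"
  shows "\<exists>c\<in>{0<..<1}. \<forall>p\<in>{0..1}. s p \<le> s c"
proof -
  note adm = assms(1) and le = assms(2) and lam = assms(3) and a = assms(4,5) and sdef = assms(6)
  have fin: "finite E"
    using adm unfolding admissible_def simple_graph_def by (meson finite_SigmaI finite_subset)
  define b where "b = (a + 1 / lam) / 2"
  have ab: "a < b" and b1: "b < 1 / lam" using a by (auto simp: b_def)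
  have b0: "0 < b" using a ab by simp
  have noeig: "\<forall>e\<in>E. v e = 0"
    if t: "0 < t" "t \<le> b" and hv: "\<forall>e\<in>E. (\<Sum>f\<in>E. ((if e = f then 1 else 0) - t * olg_T e f) * v f) = 0" for t v
  proof (rule ccontr)
    assume "\<not> (\<forall>e\<in>E. v e = 0)"
    then obtain e0 where e0: "e0 \<in> E" "v e0 \<noteq> 0" by blast
    have ev: "(\<Sum>f\<in>E. olg_T e f * v f) = (1 / t) * v e" if e: "e \<in> E" for e
    proof -
      have "(\<Sum>f\<in>E. ((if e = f then 1 else 0) - t * olg_T e f) * v f)
          = (\<Sum>f\<in>E. (if e = f then v f else 0) - t * (olg_T e f * v f))"
        by (intro sum.cong refl) (auto simp: algebra_simps)
      also have "\<dots> = (\<Sum>f\<in>E. (if e = f then v f else 0)) - (\<Sum>f\<in>E. t * (olg_T e f * v f))"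
        by (rule sum_subtractf)
      also have "\<dots> = v e - t * (\<Sum>f\<in>E. olg_T e f * v f)"
        using e fin by (simp add: sum_distrib_left)
      finally have "v e = t * (\<Sum>f\<in>E. olg_T e f * v f)" using hv e by simp
      then show ?thesis using t by (simp add: field_simps)
    qed
    have "T_eigenvalue E (of_real (1 / t))"
      unfolding T_eigenvalue_def
    proof (intro exI[of _ "\<lambda>e. complex_of_real (v e)"] conjI bexI[OF _ e0(1)] ballI)
      show "complex_of_real (v e0) \<noteq> 0" using e0 by simp
      fix e assume e: "e \<in> E"
      have "(\<Sum>f\<in>E. complex_of_real (olg_T e f) * complex_of_real (v f))
          = complex_of_real (\<Sum>f\<in>E. olg_T e f * v f)" by simp
      also have "\<dots> = complex_of_real (1 / t) * complex_of_real (v e)" using ev[OF e] by simp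
      finally show "(\<Sum>f\<in>E. complex_of_real (olg_T e f) * complex_of_real (v f))
          = complex_of_real (1 / t) * complex_of_real (v e)" .
    qed
    then have "1 / t \<le> lam" using le unfolding largest_eigenvalue_def by blast
    moreover have "1 / lam > t" using t b1 by simp
    ultimately show False using t lam by (simp add: field_simps)
  qed
  have bC: "b \<in> convset E"
  proof (rule conv_below[OF fin b0])
    fix t assume t: "0 < t" "t \<le> b"
    show "\<exists>B. \<forall>e\<in>E. \<forall>g\<in>E.
        (\<Sum>f\<in>E. B e f * ((if f = g then 1 else 0) - t * olg_T f g)) = (if e = g then 1 else 0)"
      by (rule fin_left_inverse[OF fin]) (rule noeig[OF t])
  qed
  note ZA = zeta_analysis[OF fin b0 bC a(1) ab]
  define Z where "Z = ihara_zeta E"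
  define D where "D = 1 + a * deriv Z a"
  have D1: "1 \<le> D" using ZA(1) a by (simp add: D_def Z_def)
  have s_eq: "s p = p * (Z a + 1 - (Z (a * p) + p)) / D" for p by (simp add: sdef Z_def D_def)
  have Zmono: "Z (a * p) \<le> Z a" if "0 \<le> p" "p \<le> 1" for p
  proof -
    have ap: "a * p \<le> a" using that a by (simp add: mult_left_le)
    have "ihara_zeta E (a * p) \<le> ihara_zeta E a"
      by (rule ZA(3)) (use a ab that ap in auto)
    then show ?thesis by (simp add: Z_def)
  qed
  have cont: "continuous_on {0..1} s"
  proof (rule continuous_at_imp_continuous_on, rule ballI)
    fix p :: real assume p: "p \<in> {0..1}"
    have ap: "a * p \<le> a" "0 \<le> a * p" using p a by (auto simp: mult_left_le)
    have "isCont (ihara_zeta E) (a * p)"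
      by (rule ZA(2)) (use ap ab in auto)
    then have cz: "isCont Z (a * p)" by (simp add: Z_def)
    have cl: "isCont (\<lambda>p. a * p) p" by (intro continuous_intros)
    have "isCont (\<lambda>p. Z (a * p)) p" using isCont_o2[OF cl, of Z] cz by simp
    then have "isCont (\<lambda>p. p * (Z a + 1 - (Z (a * p) + p)) / D) p" using D1 by (intro continuous_intros) auto
    moreover have "s = (\<lambda>p. p * (Z a + 1 - (Z (a * p) + p)) / D)" by (rule ext) (rule s_eq)
    ultimately show "isCont s p" by simp
  qed
  obtain c where c: "c \<in> {0..1}" "\<forall>p\<in>{0..1}. s p \<le> s c"
    using continuous_attains_sup[OF compact_Icc _ cont] by auto
  have "0 < s (1/2)"
  proof -
    have "0 < Z a + 1 - (Z (a * (1/2)) + 1/2)" using Zmono[of "1/2"] by simp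
    then show ?thesis using D1 by (simp add: s_eq)
  qed
  moreover have "s 0 = 0" "s 1 = 0" by (simp_all add: s_eq)
  moreover have "s (1/2) \<le> s c" using c(2) by auto
  ultimately have "c \<noteq> 0" "c \<noteq> 1" by auto
  then have "c \<in> {0<..<1}" using c(1) by auto
  with c(2) show ?thesis by blast
qed

end
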